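(* Let $R$ be a commutative ring, $S$ a subring of $R$, $I$ an ideal of $S$, $n\ge1$, and $f\in(T_n(R))[x]$. Then \[f\in\mathrm{Int}_{T_n(R)}(T_n(S),T_n(I))\iff f_{ij}\in\mathrm{Int}_R(T_{n-j+1}(S),T_{n-j+1}(I))\text{ for all }1\le i\le j\le n,\] and \[f\in\mathrm{Int}^{\ell}_{T_n(R)}(T_n(S),T_n(I))\iff f_{ij}\in\mathrm{Int}_R(T_{i}(S),T_{i}(I))\text{ for all }1\le i\le j\le n.\]
   Context: $T_n(A)$ denotes the ring of upper triangular $n\times n$ matrices over a ring $A$. For $f=\sum_k F_kx^k\in(T_n(R))[x]$ with $F_k\in T_n(R)$, right substitution is $f(C)=\sum_kF_kC^k$ and left substitution is $f(C)_\ell=\sum_kC^kF_k$. Writing $f_{ij}^{(k)}$ for the $(i,j)$-entry of $F_k$, set $f_{ij}=\sum_k f_{ij}^{(k)}x^k\in R[x]$ (so $f_{ij}=0$ for $i>j$). Definitions: $\mathrm{Int}_R(T_m(S),T_m(I))=\{g\in R[x]\mid \forall C\in T_m(S):\ g(C)\in T_m(I)\}$ (usual evaluation); $\mathrm{Int}_{T_n(R)}(T_n(S),T_n(I))=\{f\in(T_n(R))[x]\mid\forall C\in T_n(S):\ f(C)\in T_n(I)\}$; $\mathrm{Int}^{\ell}_{T_n(R)}(T_n(S),T_n(I))=\{f\in(T_n(R))[x]\mid\forall C\in T_n(S):\ f(C)_\ell\in T_n(I)\}$. *)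

theory Defs
  imports "Jordan_Normal_Form.Matrix" "HOL-Computational_Algebra.Polynomial"
begin

text \<open>Matrices are 0-indexed (JNF).  T_m(A): upper triangular m x m matrices with entries in A.\<close>
definition Tmat :: "nat \<Rightarrow> 'a::comm_ring_1 set \<Rightarrow> 'a mat set" where
  "Tmat m A = {C \<in> carrier_mat m m. upper_triangular C \<and> (\<forall>i<m. \<forall>j<m. C $$ (i,j) \<in> A)}"

definition is_subring :: "'a::comm_ring_1 set \<Rightarrow> bool" where
  "is_subring S \<longleftrightarrow> 0 \<in> S \<and> 1 \<in> S \<and> (\<forall>a\<in>S. \<forall>b\<in>S. a + b \<in> S \<and> - a \<in> S \<and> a * b \<in> S)"

definition is_ideal_of :: "'a::comm_ring_1 set \<Rightarrow> 'a set \<Rightarrow> bool" where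
  "is_ideal_of I S \<longleftrightarrow> I \<subseteq> S \<and> 0 \<in> I \<and> (\<forall>a\<in>I. \<forall>b\<in>I. a + b \<in> I \<and> - a \<in> I)
      \<and> (\<forall>s\<in>S. \<forall>a\<in>I. s * a \<in> I)"

definition mat_eval :: "nat \<Rightarrow> 'a::comm_ring_1 poly \<Rightarrow> 'a mat \<Rightarrow> 'a mat" where
  "mat_eval m g C = mat m m (\<lambda>(i,j). \<Sum>k\<le>degree g. coeff g k * (C ^\<^sub>m k) $$ (i,j))"

definition IntR :: "nat \<Rightarrow> 'a::comm_ring_1 set \<Rightarrow> 'a set \<Rightarrow> 'a poly set" where
  "IntR m S I = {g. \<forall>C\<in>Tmat m S. mat_eval m g C \<in> Tmat m I}"

text \<open>A polynomial f = sum_k F_k x^k over T_n(R) is represented by its coefficient list Fs.\<close>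
definition mpoly_in :: "nat \<Rightarrow> 'a::comm_ring_1 mat list \<Rightarrow> bool" where
  "mpoly_in n Fs \<longleftrightarrow> (\<forall>F\<in>set Fs. F \<in> Tmat n UNIV)"

definition eval_right :: "nat \<Rightarrow> 'a::comm_ring_1 mat list \<Rightarrow> 'a mat \<Rightarrow> 'a mat" where
  "eval_right n Fs C = mat n n (\<lambda>(i,j). \<Sum>k<length Fs. (Fs ! k * C ^\<^sub>m k) $$ (i,j))"

definition eval_left :: "nat \<Rightarrow> 'a::comm_ring_1 mat list \<Rightarrow> 'a mat \<Rightarrow> 'a mat" where
  "eval_left n Fs C = mat n n (\<lambda>(i,j). \<Sum>k<length Fs. (C ^\<^sub>m k * Fs ! k) $$ (i,j))"

definition entry_poly :: "'a::comm_ring_1 mat list \<Rightarrow> nat \<Rightarrow> nat \<Rightarrow> 'a poly" where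
  "entry_poly Fs i j = Poly (map (\<lambda>F. F $$ (i,j)) Fs)"

definition IntT :: "nat \<Rightarrow> 'a::comm_ring_1 set \<Rightarrow> 'a set \<Rightarrow> 'a mat list set" where
  "IntT n S I = {Fs. mpoly_in n Fs \<and> (\<forall>C\<in>Tmat n S. eval_right n Fs C \<in> Tmat n I)}"

definition IntT_left :: "nat \<Rightarrow> 'a::comm_ring_1 set \<Rightarrow> 'a set \<Rightarrow> 'a mat list set" where
  "IntT_left n S I = {Fs. mpoly_in n Fs \<and> (\<forall>C\<in>Tmat n S. eval_left n Fs C \<in> Tmat n I)}"

end

theory Submission
  imports Defs
begin

lemma mult_entry:
  assumes "A \<in> carrier_mat n n" "B \<in> carrier_mat n n" "i < n" "j < n"
  shows "(A * B) $$ (i,j) = (\<Sum>r<n. A $$ (i,r) * B $$ (r,j))"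
  using assms by (simp add: scalar_prod_def lessThan_atLeast0)

lemma ut_mult:
  assumes A: "A \<in> carrier_mat n n" and B: "B \<in> carrier_mat n n"
    and uA: "upper_triangular A" and uB: "upper_triangular B"
  shows "upper_triangular (A * B)"
proof -
  have "(A * B) $$ (i,j) = 0" if "i < n" "j < i" for i j
  proof -
    have "(A * B) $$ (i,j) = (\<Sum>r<n. A $$ (i,r) * B $$ (r,j))"
      using mult_entry[OF A B] that by simp
    also have "\<dots> = 0"
    proof (rule sum.neutral, intro ballI)
      fix r assume r: "r \<in> {..<n}"
      show "A $$ (i,r) * B $$ (r,j) = 0"
      proof (cases "r < i")
        case True
        have "A $$ (i,r) = 0" by (rule upper_triangularD[OF uA True]) (use A that in auto)
        then show ?thesis by simp
      next
        case False
        have "B $$ (r,j) = 0" by (rule upper_triangularD[OF uB]) (use B that r False in auto)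
        then show ?thesis by simp
      qed
    qed
    finally show ?thesis .
  qed
  then show ?thesis using A unfolding upper_triangular_def by auto
qed

lemma ut_pow:
  assumes A: "A \<in> carrier_mat n n" and uA: "upper_triangular A"
  shows "upper_triangular (A ^\<^sub>m k)"
proof (induction k)
  case 0
  then show ?case using A unfolding upper_triangular_def by auto
next
  case (Suc k)
  then show ?case using ut_mult[OF pow_carrier_mat[OF A] A _ uA] by simp
qed

lemma ut_pow_entry:
  assumes A: "A \<in> carrier_mat n n" and uA: "upper_triangular A" and "j < i" "i < n"
  shows "(A ^\<^sub>m k) $$ (i,j) = 0"
  using ut_pow[OF A uA, of k] assms by auto

lemma pow_zero_row:
  assumes C: "C \<in> carrier_mat n n" and p: "p < n" and z: "\<forall>q<n. C $$ (p,q) = 0"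
  shows "q < n \<Longrightarrow> (C ^\<^sub>m k) $$ (p,q) = (if k = 0 \<and> p = q then 1 else 0)"
proof (induction k arbitrary: q)
  case 0
  then show ?case using C p by auto
next
  case (Suc k)
  have "(C ^\<^sub>m Suc k) $$ (p,q) = (\<Sum>r<n. (C ^\<^sub>m k) $$ (p,r) * C $$ (r,q))"
    using mult_entry[OF pow_carrier_mat[OF C] C p Suc.prems] by simp
  also have "\<dots> = (\<Sum>r<n. (if k = 0 \<and> p = r then 1 else 0) * C $$ (r,q))"
    using Suc.IH by simp
  also have "\<dots> = 0"
    by (rule sum.neutral) (use z Suc.prems in auto)
  finally show ?case by simp
qed

definition shiftm :: "nat \<Rightarrow> nat \<Rightarrow> 'a::comm_ring_1 mat \<Rightarrow> 'a mat" where
  "shiftm m' a C = mat m' m' (\<lambda>(p,q). if p + a < dim_row C \<and> q + a < dim_row C then C $$ (p+a,q+a) else 0)"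

lemma shift_pow:
  assumes C: "C \<in> carrier_mat m m" and uC: "upper_triangular C"
  shows "p + a < m \<Longrightarrow> q + a < m \<Longrightarrow> p < m' \<Longrightarrow> q < m' \<Longrightarrow>
     (shiftm m' a C ^\<^sub>m k) $$ (p,q) = (C ^\<^sub>m k) $$ (p+a,q+a)"
proof (induction k arbitrary: q)
  case 0
  then show ?case unfolding shiftm_def using C by auto
next
  case (Suc k)
  let ?E = "shiftm m' a C"
  have E: "?E \<in> carrier_mat m' m'" unfolding shiftm_def by auto
  let ?K = "{r. r < m' \<and> r + a < m}"
  have "(?E ^\<^sub>m Suc k) $$ (p,q) = (\<Sum>r<m'. (?E ^\<^sub>m k) $$ (p,r) * ?E $$ (r,q))"
    using mult_entry[OF pow_carrier_mat[OF E] E Suc.prems(3,4)] by simp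
  also have "\<dots> = (\<Sum>r\<in>?K. (?E ^\<^sub>m k) $$ (p,r) * ?E $$ (r,q))"
  proof (rule sum.mono_neutral_right)
    show "\<forall>r\<in>{..<m'} - ?K. (?E ^\<^sub>m k) $$ (p,r) * ?E $$ (r,q) = 0"
    proof
      fix r assume r: "r \<in> {..<m'} - ?K"
      then have "?E $$ (r,q) = 0" using Suc.prems C by (auto simp: shiftm_def)
      then show "(?E ^\<^sub>m k) $$ (p,r) * ?E $$ (r,q) = 0" by simp
    qed
  qed auto
  also have "\<dots> = (\<Sum>r\<in>?K. (C ^\<^sub>m k) $$ (p+a,r+a) * C $$ (r+a,q+a))"
    by (rule sum.cong) (use Suc C in \<open>auto simp: shiftm_def\<close>)
  also have "\<dots> = (\<Sum>r\<in>(\<lambda>r. r + a) ` ?K. (C ^\<^sub>m k) $$ (p+a,r) * C $$ (r,q+a))"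
    by (subst sum.reindex) (auto simp: inj_on_def)
  also have "\<dots> = (\<Sum>r<m. (C ^\<^sub>m k) $$ (p+a,r) * C $$ (r,q+a))"
  proof (rule sum.mono_neutral_left)
    show "(\<lambda>r. r + a) ` ?K \<subseteq> {..<m}" by auto
    show "\<forall>r\<in>{..<m} - (\<lambda>r. r + a) ` ?K. (C ^\<^sub>m k) $$ (p+a,r) * C $$ (r,q+a) = 0"
    proof
      fix r assume r: "r \<in> {..<m} - (\<lambda>r. r + a) ` ?K"
      show "(C ^\<^sub>m k) $$ (p+a,r) * C $$ (r,q+a) = 0"
      proof (cases "r < a")
        case True
        then show ?thesis using ut_pow_entry[OF C uC, of r "p+a" k] Suc.prems by simp
      next
        case False
        then have "r - a \<ge> m'"
        proof -
          have "r = (r - a) + a" using False by simp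
          then show ?thesis using r by (metis (mono_tags, lifting) DiffE image_eqI lessThan_iff mem_Collect_eq not_le)
        qed
        then have "q + a < r" using Suc.prems by linarith
        then have "C $$ (r,q+a) = 0" by (intro upper_triangularD[OF uC]) (use C r in auto)
        then show ?thesis by simp
      qed
    qed
  qed simp
  also have "\<dots> = (C ^\<^sub>m Suc k) $$ (p+a,q+a)"
    using mult_entry[OF pow_carrier_mat[OF C] C, of "p+a" "q+a" k] Suc.prems by simp
  finally show ?case .
qed

definition ev :: "nat \<Rightarrow> 'a::comm_ring_1 poly \<Rightarrow> 'a mat \<Rightarrow> nat \<Rightarrow> nat \<Rightarrow> 'a" where
  "ev N g C p q = (\<Sum>k<N. coeff g k * (C ^\<^sub>m k) $$ (p,q))"

lemma mat_eval_entry: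
  assumes "p < m" "q < m" and z: "\<forall>k\<ge>N. coeff g k = 0"
  shows "mat_eval m g C $$ (p,q) = ev N g C p q"
proof -
  let ?M = "max (Suc (degree g)) N"
  let ?h = "\<lambda>k. coeff g k * (C ^\<^sub>m k) $$ (p,q)"
  have "mat_eval m g C $$ (p,q) = (\<Sum>k\<le>degree g. ?h k)"
    using assms unfolding mat_eval_def by simp
  also have "\<dots> = (\<Sum>k<?M. ?h k)"
    by (rule sum.mono_neutral_left) (auto simp: coeff_eq_0)
  also have "\<dots> = (\<Sum>k<N. ?h k)"
    by (rule sum.mono_neutral_right) (use z in auto)
  finally show ?thesis unfolding ev_def .
qed

lemma coeff_entry_poly:
  "coeff (entry_poly Fs i j) k = (if k < length Fs then Fs ! k $$ (i,j) else 0)"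
  unfolding entry_poly_def by (simp add: nth_default_def)

lemma mat_eval_entry_poly:
  assumes "p < m" "q < m"
  shows "mat_eval m (entry_poly Fs i j) C $$ (p,q) = ev (length Fs) (entry_poly Fs i j) C p q"
  by (rule mat_eval_entry) (use assms in \<open>auto simp: coeff_entry_poly\<close>)

lemma ideal_sum:
  assumes "is_ideal_of I S" "finite A" "\<forall>x\<in>A. f x \<in> I"
  shows "sum f A \<in> I"
  using assms(2,3)
proof (induction A rule: finite_induct)
  case empty then show ?case using assms(1) by (simp add: is_ideal_of_def)
next
  case (insert x F) then show ?case using assms(1) by (simp add: is_ideal_of_def)
qed

lemma Tmat_D:
  assumes "C \<in> Tmat n X"
  shows "C \<in> carrier_mat n n" "upper_triangular C" "\<And>i j. i < n \<Longrightarrow> j < n \<Longrightarrow> C $$ (i,j) \<in> X"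
  using assms unfolding Tmat_def by auto

lemma eval_right_decomp:
  assumes C: "C \<in> carrier_mat n n" and uC: "upper_triangular C" and F: "mpoly_in n Fs"
    and ij: "i \<le> j" "j < n"
  shows "eval_right n Fs C $$ (i,j) = (\<Sum>l\<in>{i..j}. ev (length Fs) (entry_poly Fs i l) C l j)"
proof -
  let ?N = "length Fs"
  have Fk: "Fs ! k \<in> Tmat n UNIV" if "k < ?N" for k using F that unfolding mpoly_in_def by auto
  have "eval_right n Fs C $$ (i,j) = (\<Sum>k<?N. (Fs ! k * C ^\<^sub>m k) $$ (i,j))"
    using ij unfolding eval_right_def by simp
  also have "\<dots> = (\<Sum>k<?N. \<Sum>l<n. Fs ! k $$ (i,l) * (C ^\<^sub>m k) $$ (l,j))"
    by (rule sum.cong[OF refl], rule mult_entry) (use Tmat_D(1)[OF Fk] C ij in auto)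
  also have "\<dots> = (\<Sum>k<?N. \<Sum>l\<in>{i..j}. Fs ! k $$ (i,l) * (C ^\<^sub>m k) $$ (l,j))"
  proof (rule sum.cong[OF refl], rule sum.mono_neutral_right)
    fix k assume k: "k \<in> {..<?N}"
    show "\<forall>l\<in>{..<n} - {i..j}. Fs ! k $$ (i,l) * (C ^\<^sub>m k) $$ (l,j) = 0"
    proof
      fix l assume l: "l \<in> {..<n} - {i..j}"
      show "Fs ! k $$ (i,l) * (C ^\<^sub>m k) $$ (l,j) = 0"
      proof (cases "l < i")
        case True
        have "Fs ! k $$ (i,l) = 0"
          by (rule upper_triangularD[OF Tmat_D(2)[OF Fk]]) (use k True ij Tmat_D(1)[OF Fk[of k]] in auto)
        then show ?thesis by simp
      next
        case False
        then have "j < l" "l < n" using l by auto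
        then show ?thesis using ut_pow_entry[OF C uC] by simp
      qed
    qed
  qed (use ij in auto)
  also have "\<dots> = (\<Sum>l\<in>{i..j}. \<Sum>k<?N. Fs ! k $$ (i,l) * (C ^\<^sub>m k) $$ (l,j))"
    by (rule sum.swap)
  also have "\<dots> = (\<Sum>l\<in>{i..j}. ev ?N (entry_poly Fs i l) C l j)"
    unfolding ev_def by (rule sum.cong[OF refl], rule sum.cong[OF refl]) (simp add: coeff_entry_poly)
  finally show ?thesis .
qed

lemma eval_right_lower:
  assumes C: "C \<in> carrier_mat n n" and uC: "upper_triangular C" and F: "mpoly_in n Fs"
    and ij: "j < i" "i < n"
  shows "eval_right n Fs C $$ (i,j) = 0"
proof -
  have Fk: "Fs ! k \<in> Tmat n UNIV" if "k < length Fs" for k using F that unfolding mpoly_in_def by auto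
  have "(Fs ! k * C ^\<^sub>m k) $$ (i,j) = 0" if "k < length Fs" for k
    using ut_mult[OF Tmat_D(1)[OF Fk[OF that]] pow_carrier_mat[OF C] Tmat_D(2)[OF Fk[OF that]] ut_pow[OF C uC, of k]]
      Tmat_D(1)[OF Fk[OF that]] ij by (intro upper_triangularD) auto
  then show ?thesis using ij unfolding eval_right_def by simp
qed

lemma shiftm_Tmat:
  assumes "C \<in> Tmat m X" "0 \<in> X"
  shows "shiftm m' a C \<in> Tmat m' X"
  using assms unfolding Tmat_def shiftm_def upper_triangular_def by auto

definition emb :: "nat \<Rightarrow> nat \<Rightarrow> 'a::comm_ring_1 mat \<Rightarrow> 'a mat" where
  "emb n l D = mat n n (\<lambda>(p,q). if l \<le> p \<and> l \<le> q then D $$ (p-l,q-l) else 0)"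

lemma emb_Tmat:
  assumes "D \<in> Tmat (n-l) X" "0 \<in> X" "l \<le> n"
  shows "emb n l D \<in> Tmat n X"
proof -
  have "upper_triangular (emb n l D)"
    unfolding upper_triangular_def
  proof (intro allI impI)
    fix p q assume "p < dim_row (emb n l D)" "q < p"
    then show "emb n l D $$ (p,q) = 0"
      using upper_triangularD[OF Tmat_D(2)[OF assms(1)], of "q-l" "p-l"] Tmat_D(1)[OF assms(1)]
      unfolding emb_def by auto
  qed
  then show ?thesis using assms Tmat_D[OF assms(1)] unfolding Tmat_def emb_def by auto
qed

lemma shiftm_emb:
  assumes "D \<in> carrier_mat (n-l) (n-l)" "l \<le> n"
  shows "shiftm (n-l) l (emb n l D) = D"
  by (rule eq_matI) (use assms in \<open>auto simp: shiftm_def emb_def\<close>)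

lemma ev_shift:
  assumes C: "C \<in> carrier_mat m m" and uC: "upper_triangular C" and "l \<le> j" "j < m" "j - l < m'"
  shows "ev N g C l j = ev N g (shiftm m' l C) 0 (j-l)"
  unfolding ev_def
  by (rule sum.cong[OF refl]) (use shift_pow[OF C uC, of 0 l "j-l" m'] assms in auto)

lemma right_thm:
  assumes S: "is_subring S" and I: "is_ideal_of I S" and F: "mpoly_in n Fs"
  shows "Fs \<in> IntT n S I \<longleftrightarrow> (\<forall>i j. i \<le> j \<and> j < n \<longrightarrow> entry_poly Fs i j \<in> IntR (n - j) S I)"
proof -
  let ?N = "length Fs"
  let ?f = "entry_poly Fs"
  have S0: "0 \<in> S" using S unfolding is_subring_def by auto
  have I0: "0 \<in> I" using I unfolding is_ideal_of_def by auto
  show ?thesis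
  proof
    assume "Fs \<in> IntT n S I"
    then have HC: "\<And>C. C \<in> Tmat n S \<Longrightarrow> eval_right n Fs C \<in> Tmat n I"
      unfolding IntT_def by auto
    have claim: "ev ?N (?f i l) D 0 c \<in> I"
      if "i \<le> l" "l < n" "D \<in> Tmat (n-l) S" "c < n-l" for c i l D
      using that
    proof (induction c arbitrary: i l D rule: less_induct)
      case (less c)
      define C where "C = emb n l D"
      have CT: "C \<in> Tmat n S" unfolding C_def by (rule emb_Tmat) (use less.prems S0 in auto)
      have Cc: "C \<in> carrier_mat n n" and uC: "upper_triangular C" using Tmat_D[OF CT] by auto
      define j where "j = l + c"
      have j: "l \<le> j" "j < n" "i \<le> j" using less.prems unfolding j_def by auto
      have D_eq: "shiftm (n-l) l C = D"
        unfolding C_def by (rule shiftm_emb) (use Tmat_D(1)[OF less.prems(3)] less.prems in auto)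
      have rowz: "\<forall>q<n. C $$ (l',q) = 0" if "l' < l" for l'
        using that less.prems(2) unfolding C_def emb_def by auto
      have tot: "eval_right n Fs C $$ (i,j) \<in> I"
        using Tmat_D(3)[OF HC[OF CT]] j by auto
      have dec: "eval_right n Fs C $$ (i,j) = (\<Sum>l'\<in>{i..j}. ev ?N (?f i l') C l' j)"
        by (rule eval_right_decomp[OF Cc uC F]) (use j in auto)
      have setsplit: "{i..j} = {i..<l} \<union> insert l {Suc l..j}" using j less.prems by auto
      have "(\<Sum>l'\<in>{i..j}. ev ?N (?f i l') C l' j) =
          (\<Sum>l'\<in>{i..<l}. ev ?N (?f i l') C l' j) + (ev ?N (?f i l) C l j + (\<Sum>l'\<in>{Suc l..j}. ev ?N (?f i l') C l' j))"
        unfolding setsplit by (subst sum.union_disjoint) auto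
      moreover have "(\<Sum>l'\<in>{i..<l}. ev ?N (?f i l') C l' j) = 0"
      proof (rule sum.neutral, intro ballI)
        fix l' assume l': "l' \<in> {i..<l}"
        have "(C ^\<^sub>m k) $$ (l',j) = 0" for k
          using pow_zero_row[OF Cc _ rowz, of l' j k] l' j by auto
        then show "ev ?N (?f i l') C l' j = 0" unfolding ev_def by simp
      qed
      moreover have "ev ?N (?f i l) C l j = ev ?N (?f i l) D 0 c"
        using ev_shift[OF Cc uC j(1,2), of "n-l" ?N "?f i l"] D_eq j_def less.prems by simp
      moreover have "(\<Sum>l'\<in>{Suc l..j}. ev ?N (?f i l') C l' j) \<in> I"
      proof (rule ideal_sum[OF I], simp, intro ballI)
        fix l' assume l': "l' \<in> {Suc l..j}"
        have "ev ?N (?f i l') C l' j = ev ?N (?f i l') (shiftm (n-l') l' C) 0 (j-l')"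
          by (rule ev_shift[OF Cc uC]) (use l' j in auto)
        also have "\<dots> \<in> I"
          by (rule less.IH) (use l' j less.prems j_def shiftm_Tmat[OF CT S0] in auto)
        finally show "ev ?N (?f i l') C l' j \<in> I" .
      qed
      ultimately have "ev ?N (?f i l) D 0 c =
          eval_right n Fs C $$ (i,j) + - (\<Sum>l'\<in>{Suc l..j}. ev ?N (?f i l') C l' j)"
        and "- (\<Sum>l'\<in>{Suc l..j}. ev ?N (?f i l') C l' j) \<in> I"
        using dec I unfolding is_ideal_of_def by auto
      then show ?case using tot I unfolding is_ideal_of_def by auto
    qed
    show "\<forall>i j. i \<le> j \<and> j < n \<longrightarrow> ?f i j \<in> IntR (n - j) S I"
    proof (intro allI impI)
      fix i l assume il: "i \<le> l \<and> l < n"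
      show "?f i l \<in> IntR (n - l) S I"
        unfolding IntR_def
      proof (intro CollectI ballI)
        fix D assume DT: "D \<in> Tmat (n-l) S"
        have Dc: "D \<in> carrier_mat (n-l) (n-l)" and uD: "upper_triangular D" using Tmat_D[OF DT] by auto
        have ent: "mat_eval (n-l) (?f i l) D $$ (p,q) \<in> I \<and> (q < p \<longrightarrow> mat_eval (n-l) (?f i l) D $$ (p,q) = 0)"
          if pq: "p < n-l" "q < n-l" for p q
        proof (cases "p \<le> q")
          case True
          have "mat_eval (n-l) (?f i l) D $$ (p,q) = ev ?N (?f i l) D p q"
            by (rule mat_eval_entry_poly) (use pq in auto)
          also have "\<dots> = ev ?N (?f i l) (shiftm (n-l) p D) 0 (q-p)"
            by (rule ev_shift[OF Dc uD]) (use True pq in auto)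
          also have "\<dots> \<in> I"
            by (rule claim) (use il True pq shiftm_Tmat[OF DT S0] in auto)
          finally show ?thesis using True by auto
        next
          case False
          have "mat_eval (n-l) (?f i l) D $$ (p,q) = ev ?N (?f i l) D p q"
            by (rule mat_eval_entry_poly) (use pq in auto)
          also have "\<dots> = 0" unfolding ev_def
            using ut_pow_entry[OF Dc uD, of q p] False pq by simp
          finally show ?thesis using I0 by auto
        qed
        show "mat_eval (n-l) (?f i l) D \<in> Tmat (n-l) I"
          unfolding Tmat_def upper_triangular_def using ent
          by (auto simp: mat_eval_def[of "n-l" _ D])
      qed
    qed
  next
    assume H: "\<forall>i j. i \<le> j \<and> j < n \<longrightarrow> ?f i j \<in> IntR (n - j) S I"
    show "Fs \<in> IntT n S I"
      unfolding IntT_def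
    proof (intro CollectI conjI F ballI)
      fix C assume CT: "C \<in> Tmat n S"
      have Cc: "C \<in> carrier_mat n n" and uC: "upper_triangular C" using Tmat_D[OF CT] by auto
      have ent: "eval_right n Fs C $$ (i,j) \<in> I \<and> (j < i \<longrightarrow> eval_right n Fs C $$ (i,j) = 0)"
        if ij: "i < n" "j < n" for i j
      proof (cases "i \<le> j")
        case True
        have "eval_right n Fs C $$ (i,j) = (\<Sum>l\<in>{i..j}. ev ?N (?f i l) C l j)"
          by (rule eval_right_decomp[OF Cc uC F]) (use True ij in auto)
        also have "\<dots> \<in> I"
        proof (rule ideal_sum[OF I], simp, intro ballI)
          fix l assume l: "l \<in> {i..j}"
          have "ev ?N (?f i l) C l j = ev ?N (?f i l) (shiftm (n-l) l C) 0 (j-l)"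
            by (rule ev_shift[OF Cc uC]) (use l ij in auto)
          also have "\<dots> = mat_eval (n-l) (?f i l) (shiftm (n-l) l C) $$ (0, j-l)"
            by (rule mat_eval_entry_poly[symmetric]) (use l ij in auto)
          also have "\<dots> \<in> I"
          proof -
            have "?f i l \<in> IntR (n-l) S I" using H l ij by auto
            then have "mat_eval (n-l) (?f i l) (shiftm (n-l) l C) \<in> Tmat (n-l) I"
              using shiftm_Tmat[OF CT S0] unfolding IntR_def by auto
            from Tmat_D(3)[OF this, of 0 "j-l"] show ?thesis using l ij by auto
          qed
          finally show "ev ?N (?f i l) C l j \<in> I" .
        qed
        finally show ?thesis using True by auto
      next
        case False
        then show ?thesis using eval_right_lower[OF Cc uC F, of j i] ij I0 by auto
      qed
      show "eval_right n Fs C \<in> Tmat n I"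
        unfolding Tmat_def upper_triangular_def using ent
        by (auto simp: eval_right_def[of n Fs C])
    qed
  qed
qed

lemma pow_comm:
  assumes B: "B \<in> carrier_mat n n"
  shows "B * B ^\<^sub>m k = B ^\<^sub>m k * B"
proof (induction k)
  case 0 then show ?case using B by simp
next
  case (Suc k)
  have "B * B ^\<^sub>m Suc k = (B * B ^\<^sub>m k) * B"
    using B by (simp add: assoc_mult_mat[of B n n "B ^\<^sub>m k" n B n])
  then show ?case using Suc by simp
qed

definition atr :: "nat \<Rightarrow> 'a::comm_ring_1 mat \<Rightarrow> 'a mat" where
  "atr n A = mat n n (\<lambda>(i,j). A $$ (n-1-j, n-1-i))"

lemma atr_carrier[simp]: "atr n A \<in> carrier_mat n n"
  unfolding atr_def by simp

lemma atr_at: assumes "A \<in> carrier_mat n n" shows "atr n (atr n A) = A"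
  by (rule eq_matI) (use assms in \<open>auto simp: atr_def\<close>)

lemma atr_mult:
  assumes A: "A \<in> carrier_mat n n" and B: "B \<in> carrier_mat n n"
  shows "atr n (A * B) = atr n B * atr n A"
proof (rule eq_matI)
  fix i j assume ij: "i < dim_row (atr n B * atr n A)" "j < dim_col (atr n B * atr n A)"
  then have ij': "i < n" "j < n" by (auto simp: atr_def)
  have "atr n (A * B) $$ (i,j) = (A * B) $$ (n-1-j, n-1-i)"
    using ij' by (simp add: atr_def)
  also have "\<dots> = (\<Sum>r<n. A $$ (n-1-j,r) * B $$ (r,n-1-i))"
    by (rule mult_entry[OF A B]) (use ij' in auto)
  also have "\<dots> = (\<Sum>r<n. B $$ (n-1-r,n-1-i) * A $$ (n-1-j,n-1-r))"
    by (rule sum.reindex_bij_witness[of _ "\<lambda>r. n-1-r" "\<lambda>r. n-1-r"]) auto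
  also have "\<dots> = (\<Sum>r<n. atr n B $$ (i,r) * atr n A $$ (r,j))"
    by (rule sum.cong[OF refl]) (use ij' in \<open>auto simp: atr_def\<close>)
  also have "\<dots> = (atr n B * atr n A) $$ (i,j)"
    by (rule mult_entry[symmetric]) (use ij' in auto)
  finally show "atr n (A * B) $$ (i,j) = (atr n B * atr n A) $$ (i,j)" .
qed (auto simp: atr_def)

lemma atr_pow:
  assumes A: "A \<in> carrier_mat n n"
  shows "atr n (A ^\<^sub>m k) = (atr n A) ^\<^sub>m k"
proof (induction k)
  case 0
  have "atr n (1\<^sub>m n) = 1\<^sub>m n" by (rule eq_matI) (auto simp: atr_def)
  moreover have "dim_row (atr n A) = n" unfolding atr_def by simp
  ultimately show ?case using A by simp
next
  case (Suc k)
  have "atr n (A ^\<^sub>m Suc k) = atr n A * atr n (A ^\<^sub>m k)"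
    using atr_mult[OF pow_carrier_mat[OF A] A, of k] by simp
  also have "\<dots> = atr n A * (atr n A) ^\<^sub>m k" using Suc by simp
  also have "\<dots> = (atr n A) ^\<^sub>m Suc k" using pow_comm[OF atr_carrier] by simp
  finally show ?case .
qed

lemma atr_Tmat:
  assumes "A \<in> Tmat n X"
  shows "atr n A \<in> Tmat n X"
proof -
  have "upper_triangular (atr n A)"
    unfolding upper_triangular_def
  proof (intro allI impI)
    fix i j assume "i < dim_row (atr n A)" "j < i"
    then show "atr n A $$ (i,j) = 0"
      using upper_triangularD[OF Tmat_D(2)[OF assms], of "n-1-i" "n-1-j"] Tmat_D(1)[OF assms]
      by (auto simp: atr_def)
  qed
  then show ?thesis using Tmat_D(3)[OF assms] unfolding Tmat_def by (auto simp: atr_def)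
qed

lemma atr_eval_left:
  assumes C: "C \<in> carrier_mat n n" and F: "mpoly_in n Fs"
  shows "atr n (eval_left n Fs C) = eval_right n (map (atr n) Fs) (atr n C)"
proof (rule eq_matI)
  have Fk: "Fs ! k \<in> carrier_mat n n" if "k < length Fs" for k
    using F that unfolding mpoly_in_def Tmat_def by auto
  fix i j assume ij: "i < dim_row (eval_right n (map (atr n) Fs) (atr n C))"
    "j < dim_col (eval_right n (map (atr n) Fs) (atr n C))"
  then have ij': "i < n" "j < n" by (auto simp: eval_right_def)
  have "atr n (eval_left n Fs C) $$ (i,j) = (\<Sum>k<length Fs. (C ^\<^sub>m k * Fs ! k) $$ (n-1-j, n-1-i))"
    using ij' by (simp add: atr_def eval_left_def)
  also have "\<dots> = (\<Sum>k<length Fs. atr n (C ^\<^sub>m k * Fs ! k) $$ (i,j))"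
    by (rule sum.cong[OF refl]) (use ij' in \<open>auto simp: atr_def\<close>)
  also have "\<dots> = (\<Sum>k<length Fs. (map (atr n) Fs ! k * atr n C ^\<^sub>m k) $$ (i,j))"
    by (rule sum.cong[OF refl]) (simp add: atr_mult[OF pow_carrier_mat[OF C] Fk] atr_pow[OF C])
  also have "\<dots> = eval_right n (map (atr n) Fs) (atr n C) $$ (i,j)"
    using ij' by (simp add: eval_right_def)
  finally show "atr n (eval_left n Fs C) $$ (i,j) = eval_right n (map (atr n) Fs) (atr n C) $$ (i,j)" .
qed (auto simp: eval_right_def atr_def)

lemma mpoly_in_at: "mpoly_in n Fs \<Longrightarrow> mpoly_in n (map (atr n) Fs)"
  unfolding mpoly_in_def using atr_Tmat by auto

lemma entry_poly_at:
  assumes "i < n" "j < n"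
  shows "entry_poly (map (atr n) Fs) i j = entry_poly Fs (n-1-j) (n-1-i)"
  unfolding entry_poly_def using assms by (simp add: atr_def o_def)

lemma left_iff:
  assumes F: "mpoly_in n Fs"
  shows "Fs \<in> IntT_left n S I \<longleftrightarrow> map (atr n) Fs \<in> IntT n S I"
proof
  assume H: "Fs \<in> IntT_left n S I"
  show "map (atr n) Fs \<in> IntT n S I"
    unfolding IntT_def
  proof (intro CollectI conjI mpoly_in_at[OF F] ballI)
    fix C' assume C': "C' \<in> Tmat n S"
    have Cc: "C' \<in> carrier_mat n n" using Tmat_D(1)[OF C'] .
    have "eval_left n Fs (atr n C') \<in> Tmat n I" using H atr_Tmat[OF C'] unfolding IntT_left_def by auto
    then have "atr n (eval_left n Fs (atr n C')) \<in> Tmat n I" by (rule atr_Tmat)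
    then show "eval_right n (map (atr n) Fs) C' \<in> Tmat n I"
      using atr_eval_left[OF atr_carrier F] atr_at[OF Cc] by simp
  qed
next
  assume H: "map (atr n) Fs \<in> IntT n S I"
  show "Fs \<in> IntT_left n S I"
    unfolding IntT_left_def
  proof (intro CollectI conjI F ballI)
    fix C assume C: "C \<in> Tmat n S"
    have Cc: "C \<in> carrier_mat n n" using Tmat_D(1)[OF C] .
    have "eval_right n (map (atr n) Fs) (atr n C) \<in> Tmat n I"
      using H atr_Tmat[OF C] unfolding IntT_def by auto
    then have "atr n (atr n (eval_left n Fs C)) \<in> Tmat n I"
      using atr_eval_left[OF Cc F] atr_Tmat by metis
    moreover have "eval_left n Fs C \<in> carrier_mat n n" by (simp add: eval_left_def)
    ultimately show "eval_left n Fs C \<in> Tmat n I" using atr_at by metis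
  qed
qed

theorem theorem4p2:
  fixes S I :: "'a::comm_ring_1 set" and n :: nat and Fs :: "'a mat list"
  assumes "is_subring S" and "is_ideal_of I S" and "n \<ge> 1" and "mpoly_in n Fs"
  shows "(Fs \<in> IntT n S I \<longleftrightarrow>
           (\<forall>i j. i \<le> j \<and> j < n \<longrightarrow> entry_poly Fs i j \<in> IntR (n - j) S I))
       \<and> (Fs \<in> IntT_left n S I \<longleftrightarrow>
           (\<forall>i j. i \<le> j \<and> j < n \<longrightarrow> entry_poly Fs i j \<in> IntR (i + 1) S I))"
proof
  show "Fs \<in> IntT n S I \<longleftrightarrow>
           (\<forall>i j. i \<le> j \<and> j < n \<longrightarrow> entry_poly Fs i j \<in> IntR (n - j) S I)"
    by (rule right_thm) (use assms in auto)
  have R: "Fs \<in> IntT_left n S I \<longleftrightarrow>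
      (\<forall>i j. i \<le> j \<and> j < n \<longrightarrow> entry_poly (map (atr n) Fs) i j \<in> IntR (n - j) S I)"
    using left_iff[OF assms(4)] right_thm[OF assms(1,2) mpoly_in_at[OF assms(4)]] by simp
  have E: "(\<forall>i j. i \<le> j \<and> j < n \<longrightarrow> entry_poly (map (atr n) Fs) i j \<in> IntR (n - j) S I) \<longleftrightarrow>
        (\<forall>i j. i \<le> j \<and> j < n \<longrightarrow> entry_poly Fs i j \<in> IntR (i + 1) S I)"
  proof
    assume A: "\<forall>i j. i \<le> j \<and> j < n \<longrightarrow> entry_poly (map (atr n) Fs) i j \<in> IntR (n - j) S I"
    show "\<forall>i j. i \<le> j \<and> j < n \<longrightarrow> entry_poly Fs i j \<in> IntR (i + 1) S I"
    proof (intro allI impI)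
      fix i j assume ij: "i \<le> j \<and> j < n"
      have "entry_poly (map (atr n) Fs) (n-1-j) (n-1-i) \<in> IntR (n - (n-1-i)) S I"
        using A[rule_format, of "n-1-j" "n-1-i"] ij by auto
      moreover have "entry_poly (map (atr n) Fs) (n-1-j) (n-1-i) = entry_poly Fs i j"
        using entry_poly_at[of "n-1-j" n "n-1-i" Fs] ij by simp
      moreover have "n - (n-1-i) = i + 1" using ij by simp
      ultimately show "entry_poly Fs i j \<in> IntR (i + 1) S I" by simp
    qed
  next
    assume A: "\<forall>i j. i \<le> j \<and> j < n \<longrightarrow> entry_poly Fs i j \<in> IntR (i + 1) S I"
    show "\<forall>i j. i \<le> j \<and> j < n \<longrightarrow> entry_poly (map (atr n) Fs) i j \<in> IntR (n - j) S I"
    proof (intro allI impI)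
      fix i j assume ij: "i \<le> j \<and> j < n"
      have "entry_poly Fs (n-1-j) (n-1-i) \<in> IntR (n-1-j + 1) S I"
        using A[rule_format, of "n-1-j" "n-1-i"] ij by auto
      moreover have "entry_poly (map (atr n) Fs) i j = entry_poly Fs (n-1-j) (n-1-i)"
        using entry_poly_at[of i n j Fs] ij by simp
      moreover have "n-1-j + 1 = n - j" using ij by linarith
      ultimately show "entry_poly (map (atr n) Fs) i j \<in> IntR (n - j) S I" by simp
    qed
  qed
  show "Fs \<in> IntT_left n S I \<longleftrightarrow>
           (\<forall>i j. i \<le> j \<and> j < n \<longrightarrow> entry_poly Fs i j \<in> IntR (i + 1) S I)"
    using R E by simp
qed

end
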